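(* Let $G$ be a finite group, let $K$ be a normal solvable subgroup of $G$, and let $p \in \pi(G)$. If $d_G(p) < |H(p,G)|$, then $p \notin \pi(K)$.
   Context: For a finite group $X$, $\pi(X)$ is the set of prime divisors of $|X|$, and for a positive integer $a$, $\pi(a)$ is the set of prime divisors of $a$. The prime graph $GK(G)$ of $G$ has vertex set $\pi(G)$, with distinct vertices $p,q$ adjacent iff $G$ contains an element of order $pq$; $d_G(p)$ denotes the degree of the vertex $p$ in $GK(G)$. For $p \in \pi(G)$, $w_G(p) = \max\{ i : p^i \mid |G|\}$. For $p\in\pi(G)$ with $m = w_G(p)$, define $$\theta(p) = \pi(G) \setminus \Big(\{p\} \cup \bigcup_{i=1}^{m} \pi(p^i-1)\Big), \qquad \bar\theta(p) = \pi(G)\setminus\big(\{p\}\cup \pi(p^m-1)\big),$$ and $$H(p,G) = \{ q \in \theta(p) \;:\; p \in \bar\theta(q)\}.$$ *)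

theory Defs
  imports "HOL-Algebra.Algebra" "HOL-Computational_Algebra.Primes"
begin

definition pi_num :: "nat \<Rightarrow> nat set" where
  "pi_num a = {p. Factorial_Ring.prime p \<and> p dvd a}"

definition pi_grp :: "('a, 'b) monoid_scheme \<Rightarrow> nat set" where
  "pi_grp G = pi_num (order G)"

definition gk_adj :: "('a, 'b) monoid_scheme \<Rightarrow> nat \<Rightarrow> nat \<Rightarrow> bool" where
  "gk_adj G p q \<longleftrightarrow> p \<in> pi_grp G \<and> q \<in> pi_grp G \<and> p \<noteq> q \<and>
     (\<exists>x \<in> carrier G. group.ord G x = p * q)"

definition gk_deg :: "('a, 'b) monoid_scheme \<Rightarrow> nat \<Rightarrow> nat" where
  "gk_deg G p = card {q. gk_adj G p q}"

definition w_grp :: "('a, 'b) monoid_scheme \<Rightarrow> nat \<Rightarrow> nat" where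
  "w_grp G p = multiplicity p (order G)"

definition theta :: "('a, 'b) monoid_scheme \<Rightarrow> nat \<Rightarrow> nat set" where
  "theta G p = pi_grp G - ({p} \<union> (\<Union>i\<in>{1..w_grp G p}. pi_num (p ^ i - 1)))"

definition theta_bar :: "('a, 'b) monoid_scheme \<Rightarrow> nat \<Rightarrow> nat set" where
  "theta_bar G p = pi_grp G - ({p} \<union> pi_num (p ^ w_grp G p - 1))"

definition H_set :: "('a, 'b) monoid_scheme \<Rightarrow> nat \<Rightarrow> nat set" where
  "H_set G p = {q \<in> theta G p. p \<in> theta_bar G q}"

end

theory Submission
  imports Defs
begin


lemma fixpoint_action:
  assumes grp: "group P"
    and closed: "\<And>g e. g \<in> carrier P \<Longrightarrow> e \<in> E \<Longrightarrow> \<phi> g e \<in> E"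
    and one: "\<And>e. e \<in> E \<Longrightarrow> \<phi> \<one>\<^bsub>P\<^esub> e = e"
    and mult: "\<And>g h e. g \<in> carrier P \<Longrightarrow> h \<in> carrier P \<Longrightarrow> e \<in> E \<Longrightarrow> \<phi> (g \<otimes>\<^bsub>P\<^esub> h) e = \<phi> g (\<phi> h e)"
  shows "group_action P E (\<lambda>g. restrict (\<phi> g) E)"
proof -
  interpret P: group P by fact
  have bij: "restrict (\<phi> g) E \<in> Bij E" if g: "g \<in> carrier P" for g
  proof -
    have inv1: "\<phi> (inv\<^bsub>P\<^esub> g) (\<phi> g e) = e" if "e \<in> E" for e
      using mult[of "inv\<^bsub>P\<^esub> g" g e] one[of e] g that by simp
    have inv2: "\<phi> g (\<phi> (inv\<^bsub>P\<^esub> g) e) = e" if "e \<in> E" for e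
      using mult[of g "inv\<^bsub>P\<^esub> g" e] one[of e] g that by simp
    have "bij_betw (\<phi> g) E E"
    proof (rule bij_betwI[where g="\<phi> (inv\<^bsub>P\<^esub> g)"])
      show "\<phi> g \<in> E \<rightarrow> E" using closed g by blast
      show "\<phi> (inv\<^bsub>P\<^esub> g) \<in> E \<rightarrow> E" using closed g by (meson P.inv_closed Pi_I)
    qed (use inv1 inv2 in auto)
    then show ?thesis unfolding Bij_def
      by (metis IntI bij_betw_cong mem_Collect_eq restrict_apply' restrict_extensional)
  qed
  show ?thesis
    unfolding group_action_def group_hom_def group_hom_axioms_def
  proof (intro conjI)
    show "group P" by fact
    show "group (BijGroup E)" by (rule group_BijGroup)
    show "(\<lambda>g. restrict (\<phi> g) E) \<in> hom P (BijGroup E)"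
    proof (rule homI)
      fix g assume "g \<in> carrier P" thus "restrict (\<phi> g) E \<in> carrier (BijGroup E)"
        using bij by (simp add: BijGroup_def)
    next
      fix g h assume g: "g \<in> carrier P" and h: "h \<in> carrier P"
      show "restrict (\<phi> (g \<otimes>\<^bsub>P\<^esub> h)) E = restrict (\<phi> g) E \<otimes>\<^bsub>BijGroup E\<^esub> restrict (\<phi> h) E"
      proof -
        have gh: "g \<otimes>\<^bsub>P\<^esub> h \<in> carrier P" using g h by simp
        have "restrict (\<phi> g) E \<otimes>\<^bsub>BijGroup E\<^esub> restrict (\<phi> h) E = compose E (restrict (\<phi> g) E) (restrict (\<phi> h) E)"
          using bij[OF g] bij[OF h] by (simp add: BijGroup_def)
        also have "\<dots> = restrict (\<phi> (g \<otimes>\<^bsub>P\<^esub> h)) E"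
          unfolding compose_def using mult[OF g h] closed[OF h] by (intro restrict_ext) simp
        finally show ?thesis by simp
      qed
    qed
  qed
qed



lemma fixpoint_count:
  assumes grp: "group P" and fin: "finite (carrier P)" and ord: "order P = r ^ a" and pr: "Factorial_Ring.prime r"
    and closed: "\<And>g e. g \<in> carrier P \<Longrightarrow> e \<in> E \<Longrightarrow> \<phi> g e \<in> E"
    and one: "\<And>e. e \<in> E \<Longrightarrow> \<phi> \<one>\<^bsub>P\<^esub> e = e"
    and mult: "\<And>g h e. g \<in> carrier P \<Longrightarrow> h \<in> carrier P \<Longrightarrow> e \<in> E \<Longrightarrow> \<phi> (g \<otimes>\<^bsub>P\<^esub> h) e = \<phi> g (\<phi> h e)"
    and finE: "finite E"
  shows "card E mod r = card {e \<in> E. \<forall>g \<in> carrier P. \<phi> g e = e} mod r"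
proof -
  define \<psi> where "\<psi> = (\<lambda>g. restrict (\<phi> g) E)"
  interpret A: group_action P E \<psi>
    unfolding \<psi>_def by (rule fixpoint_action[OF grp closed one mult])
  interpret P: group P by fact
  define F where "F = {e \<in> E. \<forall>g \<in> carrier P. \<phi> g e = e}"
  have orb_sub: "orbit P \<psi> e \<subseteq> E" if "e \<in> E" for e
    using that closed unfolding orbit_def \<psi>_def by auto
  have orbs_sub: "Ob \<subseteq> E" if "Ob \<in> orbits P E \<psi>" for Ob
    using that orb_sub unfolding orbits_def by auto
  have finO: "finite (orbits P E \<psi>)"
  proof -
    have "orbits P E \<psi> \<subseteq> Pow E" using orbs_sub by auto
    thus ?thesis using finE finite_subset by blast
  qed
  have orb_dvd: "card (orbit P \<psi> e) dvd r ^ a" if "e \<in> E" for e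
    using A.orbit_stabilizer_theorem[OF that] ord by (metis dvd_triv_left)
  have orb_F: "e \<in> F \<longleftrightarrow> orbit P \<psi> e = {e}" if e: "e \<in> E" for e
  proof
    assume "e \<in> F" thus "orbit P \<psi> e = {e}"
      using A.orbit_refl[OF e] unfolding F_def orbit_def \<psi>_def by auto
  next
    assume h: "orbit P \<psi> e = {e}"
    { fix g assume g: "g \<in> carrier P"
      hence "\<psi> g e \<in> orbit P \<psi> e" unfolding orbit_def by blast
      hence "\<phi> g e = e" using h e unfolding \<psi>_def by auto }
    thus "e \<in> F" using e unfolding F_def by auto
  qed
  define S1 where "S1 = {Ob \<in> orbits P E \<psi>. card Ob = 1}"
  define S2 where "S2 = {Ob \<in> orbits P E \<psi>. card Ob \<noteq> 1}"
  have "card E = (\<Sum>Ob\<in>orbits P E \<psi>. card Ob)"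
    using A.disjoint_sum[OF finE, of "\<lambda>_. (1::nat)"] by simp
  also have "\<dots> = (\<Sum>Ob\<in>S1. card Ob) + (\<Sum>Ob\<in>S2. card Ob)"
  proof -
    have "orbits P E \<psi> = S1 \<union> S2" "S1 \<inter> S2 = {}" unfolding S1_def S2_def by auto
    moreover have "finite S1" "finite S2" using finO unfolding S1_def S2_def by auto
    ultimately show ?thesis by (simp add: sum.union_disjoint)
  qed
  also have "(\<Sum>Ob\<in>S1. card Ob) = card S1" unfolding S1_def by simp
  finally have cE: "card E = card S1 + (\<Sum>Ob\<in>S2. card Ob)" .
  have "r dvd (\<Sum>Ob\<in>S2. card Ob)"
  proof (rule dvd_sum)
    fix Ob assume "Ob \<in> S2"
    then obtain e where e: "e \<in> E" "Ob = orbit P \<psi> e" and c: "card Ob \<noteq> 1"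
      unfolding S2_def orbits_def by auto
    have "card Ob dvd r ^ a" using orb_dvd e by simp
    then obtain i where "card Ob = r ^ i" using divides_primepow_nat[OF pr] by auto
    with c have "i \<noteq> 0" by auto
    thus "r dvd card Ob" using \<open>card Ob = r ^ i\<close> by (simp add: dvd_power)
  qed
  moreover have "card S1 = card F"
  proof -
    have "bij_betw (\<lambda>e. {e}) F S1"
    proof (rule bij_betwI[where g="\<lambda>Ob. THE e. Ob = {e}"])
      show "(\<lambda>e. {e}) \<in> F \<rightarrow> S1"
      proof
        fix e assume "e \<in> F"
        hence "e \<in> E" "orbit P \<psi> e = {e}" using orb_F unfolding F_def by auto
        thus "{e} \<in> S1" unfolding S1_def orbits_def by force
      qed
      show "(\<lambda>Ob. THE e. Ob = {e}) \<in> S1 \<rightarrow> F"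
      proof
        fix Ob assume "Ob \<in> S1"
        then obtain e where e: "e \<in> E" "Ob = orbit P \<psi> e" and c: "card Ob = 1"
          unfolding S1_def orbits_def by auto
        have "e \<in> Ob" using A.orbit_refl e by simp
        with c have "Ob = {e}" by (metis card_1_singletonE singletonD)
        thus "(THE e. Ob = {e}) \<in> F" using orb_F e by auto
      qed
    qed (auto simp: S1_def card_1_singleton_iff)
    thus ?thesis by (simp add: bij_betw_same_card)
  qed
  ultimately show ?thesis using cE F_def by (metis mod_add_self2 dvd_def mod_mult_self2 mult.commute)
qed



context group begin

lemma sub_pow_closed:
  assumes H: "subgroup H G" and x: "x \<in> H"
  shows "x [^] (n::nat) \<in> H"
proof -
  interpret HG: group "G\<lparr>carrier := H\<rparr>" using subgroup.subgroup_is_group[OF H is_group] .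
  have "x [^]\<^bsub>G\<lparr>carrier := H\<rparr>\<^esub> n \<in> H" using x HG.nat_pow_closed by simp
  thus ?thesis using nat_pow_consistent by metis
qed

lemma sub_pow_order:
  assumes H: "subgroup H G" and x: "x \<in> H" and fin: "finite H"
  shows "x [^] card H = \<one>"
proof -
  interpret HG: group "G\<lparr>carrier := H\<rparr>" using subgroup.subgroup_is_group[OF H is_group] .
  have "x [^]\<^bsub>G\<lparr>carrier := H\<rparr>\<^esub> (card H) = \<one>"
    using x HG.pow_order_eq_1[of x] by (simp add: order_def)
  thus ?thesis by (metis nat_pow_consistent)
qed

lemma sylow_sub:
  assumes fin: "finite (carrier G)" and H: "subgroup H G" and pr: "Factorial_Ring.prime r"
  shows "\<exists>S. subgroup S G \<and> S \<subseteq> H \<and> card S = r ^ multiplicity r (card H)"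
proof -
  interpret HG: group "G\<lparr>carrier := H\<rparr>" using subgroup.subgroup_is_group[OF H is_group] .
  have finH: "finite H" using fin H subgroup.subset finite_subset by blast
  have "order (G\<lparr>carrier := H\<rparr>) = r ^ multiplicity r (card H) * (card H div r ^ multiplicity r (card H))"
    by (simp add: order_def multiplicity_dvd)
  then obtain S where S: "subgroup S (G\<lparr>carrier := H\<rparr>)" "card S = r ^ multiplicity r (card H)"
    using sylow_thm[OF pr HG.is_group] finH by auto
  have "subgroup S G" using incl_subgroup[OF H S(1)] .
  moreover have "S \<subseteq> H" using subgroup.subset[OF S(1)] by simp
  ultimately show ?thesis using S(2) by blast
qed

lemma elt_prime_ord:
  assumes x: "x \<in> carrier G" and x1: "x \<noteq> \<one>" and pr: "Factorial_Ring.prime r"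
    and xp: "x [^] (r ^ k) = \<one>"
  shows "\<exists>i. 1 \<le> i \<and> ord x = r ^ i \<and> ord (x [^] (r ^ (i - 1))) = r"
proof -
  have "ord x dvd r ^ k" using xp pow_eq_id x by blast
  then obtain i where i: "ord x = r ^ i" using divides_primepow_nat[OF pr] by auto
  have "i \<noteq> 0" using i ord_eq_1 x x1 by (metis power_0)
  hence "1 \<le> i" by simp
  moreover have "ord (x [^] (r ^ (i - 1))) = r"
  proof -
    have d: "r ^ (i - 1) dvd ord x" using i \<open>i \<noteq> 0\<close> by (simp add: le_imp_power_dvd)
    have "ord (x [^] (r ^ (i - 1))) = ord x div r ^ (i - 1)"
      using ord_pow[OF x d] pr by (simp add: prime_gt_0_nat)
    also have "\<dots> = r" using i \<open>i \<noteq> 0\<close> pr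
      by (simp add: power_diff_power_eq)
    finally show ?thesis .
  qed
  ultimately show ?thesis using i by blast
qed

lemma cauchy_sub:
  assumes fin: "finite (carrier G)" and H: "subgroup H G" and pr: "Factorial_Ring.prime r"
    and dv: "r dvd card H"
  shows "\<exists>x \<in> H. ord x = r"
proof -
  obtain S where S: "subgroup S G" "S \<subseteq> H" "card S = r ^ multiplicity r (card H)"
    using sylow_sub[OF fin H pr] by blast
  have finH: "finite H" using finite_subset[OF subgroup.subset[OF H] fin] .
  have "card H \<noteq> 0" using finH subgroup.one_closed[OF H] by (metis card_0_eq empty_iff)
  hence m: "multiplicity r (card H) \<ge> 1"
    using dv pr by (metis multiplicity_geI not_prime_unit power_one_right)
  have finS: "finite S" using finite_subset[OF S(2) finH] .
  have "card S \<ge> 2" using S(3) m pr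
    by (metis le_trans power_increasing power_one_right prime_ge_1_nat prime_ge_2_nat)
  have "\<exists>x\<in>S. x \<noteq> \<one>"
  proof (rule ccontr)
    assume "\<not> (\<exists>x\<in>S. x \<noteq> \<one>)"
    hence "S \<subseteq> {\<one>}" by auto
    hence "card S \<le> 1" using card_mono[of "{\<one>}" S] by simp
    thus False using \<open>card S \<ge> 2\<close> by simp
  qed
  then obtain x where xS: "x \<in> S" and x1: "x \<noteq> \<one>" by blast
  have xc: "x \<in> carrier G" using subgroup.mem_carrier[OF S(1) xS] .
  have xr: "x [^] (r ^ multiplicity r (card H)) = \<one>" using sub_pow_order[OF S(1) xS finS] S(3) by simp
  then obtain i where "ord (x [^] (r ^ (i - 1))) = r"
    using elt_prime_ord[OF xc x1 pr xr] by auto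
  moreover have "x [^] (r ^ (i - 1)) \<in> H" using sub_pow_closed[OF S(1) xS] S(2) by blast
  ultimately show ?thesis by blast
qed

lemma ord_pq:
  assumes x: "x \<in> carrier G" and y: "y \<in> carrier G" and c: "x \<otimes> y = y \<otimes> x"
    and ox: "ord x = p" and oy: "ord y = q" and pp: "Factorial_Ring.prime p"
    and pq: "Factorial_Ring.prime q" and ne: "p \<noteq> q"
  shows "ord (x \<otimes> y) = p * q"
proof -
  have xy: "x \<otimes> y \<in> carrier G" using x y by simp
  have d: "ord (x \<otimes> y) dvd p * q" using ord_mul_divides[OF c x y] ox oy by simp
  have np: "\<not> ord (x \<otimes> y) dvd p"
  proof
    assume "ord (x \<otimes> y) dvd p"
    hence "(x \<otimes> y) [^] p = \<one>" using pow_eq_id xy by blast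
    hence "x [^] p \<otimes> y [^] p = \<one>" using pow_mult_distrib[OF c x y] by simp
    hence "y [^] p = \<one>" using ox x y pow_ord_eq_1 by auto
    hence "q dvd p" using pow_eq_id y oy by blast
    thus False using pp pq ne using prime_nat_iff by auto
  qed
  have nq: "\<not> ord (x \<otimes> y) dvd q"
  proof
    assume "ord (x \<otimes> y) dvd q"
    hence "(x \<otimes> y) [^] q = \<one>" using pow_eq_id xy by blast
    hence "x [^] q \<otimes> y [^] q = \<one>" using pow_mult_distrib[OF c x y] by simp
    hence "x [^] q = \<one>" using oy x y pow_ord_eq_1 by auto
    hence "p dvd q" using pow_eq_id x ox by blast
    thus False using pp pq ne using prime_nat_iff by auto
  qed
  obtain a b where ab: "ord (x \<otimes> y) = a * b" "a dvd p" "b dvd q"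
    using division_decomp[OF d] by blast
  have "a = 1 \<or> a = p" using pp ab(2) prime_nat_iff by auto
  moreover have "b = 1 \<or> b = q" using pq ab(3) prime_nat_iff by auto
  ultimately show ?thesis using np nq ab(1) by auto
qed

end



context group begin

lemma inv_cancel_l: "x \<in> carrier G \<Longrightarrow> y \<in> carrier G \<Longrightarrow> inv x \<otimes> (x \<otimes> y) = y"
  by (simp add: m_assoc[symmetric])

lemma conj_sub:
  assumes H: "subgroup H G" and g: "g \<in> carrier G"
  shows "subgroup ((\<lambda>t. g \<otimes> t \<otimes> inv g) ` H) G"
    and "card ((\<lambda>t. g \<otimes> t \<otimes> inv g) ` H) = card H"
proof -
  have HG: "H \<subseteq> carrier G" using subgroup.subset[OF H] .
  show "subgroup ((\<lambda>t. g \<otimes> t \<otimes> inv g) ` H) G"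
  proof (rule subgroupI)
    show "(\<lambda>t. g \<otimes> t \<otimes> inv g) ` H \<subseteq> carrier G" using HG g by auto
    show "(\<lambda>t. g \<otimes> t \<otimes> inv g) ` H \<noteq> {}" using subgroup.one_closed[OF H] by auto
  next
    fix a assume "a \<in> (\<lambda>t. g \<otimes> t \<otimes> inv g) ` H"
    then obtain t where t: "t \<in> H" "a = g \<otimes> t \<otimes> inv g" by auto
    have tc: "t \<in> carrier G" using t HG by auto
    have "inv a = g \<otimes> inv t \<otimes> inv g"
      using t(2) tc g by (simp add: inv_mult_group m_assoc)
    moreover have "inv t \<in> H" using subgroup.m_inv_closed[OF H t(1)] .
    ultimately show "inv a \<in> (\<lambda>t. g \<otimes> t \<otimes> inv g) ` H" by auto
  next
    fix a b assume "a \<in> (\<lambda>t. g \<otimes> t \<otimes> inv g) ` H" "b \<in> (\<lambda>t. g \<otimes> t \<otimes> inv g) ` H"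
    then obtain s t where st: "s \<in> H" "a = g \<otimes> s \<otimes> inv g" "t \<in> H" "b = g \<otimes> t \<otimes> inv g" by auto
    have sc: "s \<in> carrier G" and tc: "t \<in> carrier G" using st HG by auto
    have "a \<otimes> b = g \<otimes> (s \<otimes> t) \<otimes> inv g"
      using st sc tc g by (simp add: m_assoc inv_cancel_l)
    moreover have "s \<otimes> t \<in> H" using subgroup.m_closed[OF H st(1) st(3)] .
    ultimately show "a \<otimes> b \<in> (\<lambda>t. g \<otimes> t \<otimes> inv g) ` H" by auto
  qed
  have "inj_on (\<lambda>t. g \<otimes> t \<otimes> inv g) H"
  proof (rule inj_onI)
    fix s t assume "s \<in> H" "t \<in> H" "g \<otimes> s \<otimes> inv g = g \<otimes> t \<otimes> inv g"
    thus "s = t" using HG g by (meson inv_closed l_cancel m_closed r_cancel subsetD)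
  qed
  thus "card ((\<lambda>t. g \<otimes> t \<otimes> inv g) ` H) = card H" by (rule card_image)
qed

lemma comm_pow:
  assumes x: "x \<in> carrier G" and y: "y \<in> carrier G" and c: "x \<otimes> y = y \<otimes> x"
  shows "x \<otimes> y [^] (n::nat) = y [^] n \<otimes> x"
proof (induction n)
  case 0 thus ?case using x by simp
next
  case (Suc n)
  have "x \<otimes> y [^] Suc n = x \<otimes> (y [^] n \<otimes> y)" by simp
  also have "\<dots> = (x \<otimes> y [^] n) \<otimes> y" using x y by (simp add: m_assoc)
  also have "\<dots> = (y [^] n \<otimes> x) \<otimes> y" using Suc by simp
  also have "\<dots> = y [^] n \<otimes> (x \<otimes> y)" using x y by (simp add: m_assoc)
  also have "\<dots> = y [^] n \<otimes> (y \<otimes> x)" using c by simp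
  also have "\<dots> = y [^] Suc n \<otimes> x" using x y by (simp add: m_assoc)
  finally show ?case .
qed

lemma sylow_conj:
  assumes fin: "finite (carrier G)" and pr: "Factorial_Ring.prime r"
    and S: "subgroup S G" and cS: "card S = r ^ multiplicity r (order G)"
    and S': "subgroup S' G" and cS': "card S' = r ^ j"
  shows "\<exists>g\<in>carrier G. \<forall>t\<in>S'. g \<otimes> t \<otimes> inv g \<in> S"
proof -
  interpret P: group "G\<lparr>carrier := S'\<rparr>" using subgroup.subgroup_is_group[OF S' is_group] .
  define \<phi> where "\<phi> = (\<lambda>t C. C #> inv t)"
  have SG: "S \<subseteq> carrier G" using subgroup.subset[OF S] .
  have S'G: "S' \<subseteq> carrier G" using subgroup.subset[OF S'] .
  have cl: "\<phi> t C \<in> rcosets S" if tP: "t \<in> carrier (G\<lparr>carrier := S'\<rparr>)" and CR: "C \<in> rcosets S" for t C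
  proof -
    obtain g where g: "g \<in> carrier G" "C = S #> g" using CR unfolding RCOSETS_def by auto
    have t: "t \<in> carrier G" using tP S'G by auto
    have "\<phi> t C = S #> (g \<otimes> inv t)" unfolding \<phi>_def using g t SG by (simp add: coset_mult_assoc)
    thus ?thesis using rcosetsI[OF SG] g t by simp
  qed
  have one: "\<phi> \<one>\<^bsub>G\<lparr>carrier := S'\<rparr>\<^esub> C = C" if "C \<in> rcosets S" for C
  proof -
    have "C \<subseteq> carrier G" using that rcosets_part_G[OF S] by auto
    thus ?thesis unfolding \<phi>_def by simp
  qed
  have mult: "\<phi> (g \<otimes>\<^bsub>G\<lparr>carrier := S'\<rparr>\<^esub> h) C = \<phi> g (\<phi> h C)"
    if "g \<in> carrier (G\<lparr>carrier := S'\<rparr>)" "h \<in> carrier (G\<lparr>carrier := S'\<rparr>)" "C \<in> rcosets S" for g h C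
  proof -
    have gh: "g \<in> carrier G" "h \<in> carrier G" using that S'G by auto
    have "C \<subseteq> carrier G" using that rcosets_part_G[OF S] by auto
    thus ?thesis unfolding \<phi>_def using gh by (simp add: coset_mult_assoc inv_mult_group)
  qed
  have finE: "finite (rcosets S)"
  proof -
    have sub: "rcosets S \<subseteq> Pow (carrier G)" using rcosets_part_G[OF S] by auto
    show ?thesis using finite_subset[OF sub] fin by simp
  qed
  have ordP: "order (G\<lparr>carrier := S'\<rparr>) = r ^ j" using cS' by (simp add: order_def)
  have finP: "finite (carrier (G\<lparr>carrier := S'\<rparr>))" using finite_subset[OF S'G fin] by simp
  have cnt: "card (rcosets S) mod r = card {C \<in> rcosets S. \<forall>t \<in> carrier (G\<lparr>carrier := S'\<rparr>). \<phi> t C = C} mod r"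
    by (rule fixpoint_count[OF P.is_group finP ordP pr cl one mult finE])
  have lag: "card (rcosets S) * card S = order G" using lagrange[OF S] .
  have o0: "order G \<noteq> 0" using fin by (simp add: order_gt_0_iff_finite[symmetric])
  have ndvd: "\<not> r dvd card (rcosets S)"
  proof
    assume "r dvd card (rcosets S)"
    hence "r ^ Suc (multiplicity r (order G)) dvd order G"
      using lag cS by (metis mult.commute nat_mult_dvd_cancel_disj power_Suc)
    thus False using o0 pr by (meson Suc_n_not_le_n multiplicity_dvd_iff_dvd power_dvd_imp_le prime_nat_iff)
  qed
  hence "card {C \<in> rcosets S. \<forall>t \<in> carrier (G\<lparr>carrier := S'\<rparr>). \<phi> t C = C} \<noteq> 0"
    using cnt by (metis mod_0 mod_0_imp_dvd)
  then obtain C where C: "C \<in> rcosets S" "\<forall>t \<in> S'. \<phi> t C = C"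
    using finE by auto
  obtain g where g: "g \<in> carrier G" "C = S #> g" using C(1) unfolding RCOSETS_def by auto
  have "g \<otimes> t \<otimes> inv g \<in> S" if t: "t \<in> S'" for t
  proof -
    have tc: "t \<in> carrier G" using t S'G by auto
    have "inv t \<in> S'" using subgroup.m_inv_closed[OF S' t] .
    hence "S #> g #> t = S #> g" using C(2) g tc unfolding \<phi>_def by auto
    moreover have "g \<otimes> t \<in> S #> g #> t"
      using rcosI[OF rcos_self[OF g(1) S] r_coset_subset_G[OF SG g(1)] tc] .
    ultimately have "g \<otimes> t \<in> S #> g" by simp
    hence "g \<otimes> t \<otimes> inv g \<in> S" using subgroup.rcos_module_imp[OF S is_group g(1)] by simp
    thus ?thesis .
  qed
  thus ?thesis using g(1) by blast
qed

lemma conj_fixed: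
  assumes fin: "finite (carrier G)" and pr: "Factorial_Ring.prime r"
    and P: "subgroup P G" and cP: "card P = r ^ a"
    and T: "subgroup T G" and inv: "\<forall>g\<in>P. \<forall>t\<in>T. g \<otimes> t \<otimes> inv g \<in> T"
    and cT: "card T mod r \<noteq> 1"
  shows "\<exists>t\<in>T. t \<noteq> \<one> \<and> (\<forall>g\<in>P. g \<otimes> t = t \<otimes> g)"
proof -
  interpret PG: group "G\<lparr>carrier := P\<rparr>" using subgroup.subgroup_is_group[OF P is_group] .
  define \<phi> where "\<phi> = (\<lambda>g t. g \<otimes> t \<otimes> inv g)"
  have PGc: "P \<subseteq> carrier G" using subgroup.subset[OF P] .
  have TGc: "T \<subseteq> carrier G" using subgroup.subset[OF T] .
  have cl: "\<phi> g t \<in> T" if "g \<in> carrier (G\<lparr>carrier := P\<rparr>)" "t \<in> T" for g t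
    using inv that unfolding \<phi>_def by simp
  have one: "\<phi> \<one>\<^bsub>G\<lparr>carrier := P\<rparr>\<^esub> t = t" if "t \<in> T" for t
    using that TGc unfolding \<phi>_def by auto
  have mult: "\<phi> (g \<otimes>\<^bsub>G\<lparr>carrier := P\<rparr>\<^esub> h) t = \<phi> g (\<phi> h t)"
    if "g \<in> carrier (G\<lparr>carrier := P\<rparr>)" "h \<in> carrier (G\<lparr>carrier := P\<rparr>)" "t \<in> T" for g h t
  proof -
    have c: "g \<in> carrier G" "h \<in> carrier G" "t \<in> carrier G" using that PGc TGc by auto
    thus ?thesis unfolding \<phi>_def by (simp add: m_assoc inv_mult_group)
  qed
  have finT: "finite T" using finite_subset[OF TGc fin] by simp
  have ordP: "order (G\<lparr>carrier := P\<rparr>) = r ^ a" using cP by (simp add: order_def)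
  have finP: "finite (carrier (G\<lparr>carrier := P\<rparr>))" using finite_subset[OF PGc fin] by simp
  define F where "F = {t \<in> T. \<forall>g \<in> carrier (G\<lparr>carrier := P\<rparr>). \<phi> g t = t}"
  have cnt: "card T mod r = card F mod r"
    unfolding F_def by (rule fixpoint_count[OF PG.is_group finP ordP pr cl one mult finT])
  have oneF: "\<one> \<in> F" unfolding F_def \<phi>_def using subgroup.one_closed[OF T] PGc by auto
  have finF: "finite F" using finT unfolding F_def by auto
  have "F \<noteq> {\<one>}" using cnt cT pr using prime_nat_iff by fastforce
  then obtain t where t: "t \<in> F" "t \<noteq> \<one>" using oneF by blast
  have "g \<otimes> t = t \<otimes> g" if g: "g \<in> P" for g
  proof -
    have c: "g \<in> carrier G" "t \<in> carrier G" using g t PGc TGc unfolding F_def by auto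
    have "g \<otimes> t \<otimes> inv g = t" using t(1) g unfolding F_def \<phi>_def by auto
    hence "g \<otimes> t \<otimes> inv g \<otimes> g = t \<otimes> g" by simp
    thus ?thesis using c by (simp add: m_assoc)
  qed
  thus ?thesis using t unfolding F_def by auto
qed

end



context group begin

lemma caseA:
  assumes fin: "finite (carrier G)" and A: "A \<lhd> G" and comm: "\<forall>a\<in>A. \<forall>b\<in>A. a \<otimes> b = b \<otimes> a"
    and pp: "Factorial_Ring.prime p" and pq: "Factorial_Ring.prime q" and ne: "p \<noteq> q"
    and dA: "p dvd card A" and dG: "q dvd order G"
    and th: "\<forall>i. 1 \<le> i \<longrightarrow> i \<le> multiplicity p (order G) \<longrightarrow> \<not> q dvd p ^ i - 1"
  shows "\<exists>x\<in>carrier G. ord x = p * q"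
proof -
  have AS: "subgroup A G" using normal_imp_subgroup[OF A] .
  have AG: "A \<subseteq> carrier G" using subgroup.subset[OF AS] .
  have finA: "finite A" using finite_subset[OF AG fin] .
  define v where "v = multiplicity p (card A)"
  obtain P where P: "subgroup P G" "P \<subseteq> A" "card P = p ^ v"
    using sylow_sub[OF fin AS pp] unfolding v_def by blast
  have cA0: "card A \<noteq> 0" using finA subgroup.one_closed[OF AS] by (metis card_0_eq empty_iff)
  have v1: "v \<ge> 1" unfolding v_def using dA pp cA0
    by (metis multiplicity_geI not_prime_unit power_one_right)
  have o0: "order G \<noteq> 0" using fin by (simp add: order_gt_0_iff_finite[symmetric])
  have "card A dvd order G" using lagrange[OF AS] by (metis dvd_triv_right)
  hence "p ^ v dvd order G" unfolding v_def using multiplicity_dvd dvd_trans by blast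
  hence vle: "v \<le> multiplicity p (order G)" using o0 pp
    by (metis multiplicity_geI not_prime_unit)
  define u where "u = multiplicity q (card (carrier G))"
  obtain Y where Y: "subgroup Y G" "card Y = q ^ u"
    using sylow_sub[OF fin subgroup_self pq] unfolding u_def by blast
  have inv: "\<forall>y\<in>Y. \<forall>z\<in>P. y \<otimes> z \<otimes> inv y \<in> P"
  proof (intro ballI)
    fix y z assume y: "y \<in> Y" and z: "z \<in> P"
    have yc: "y \<in> carrier G" using subgroup.mem_carrier[OF Y(1) y] .
    define P' where "P' = (\<lambda>t. y \<otimes> t \<otimes> inv y) ` P"
    have P'S: "subgroup P' G" and cP': "card P' = card P"
      unfolding P'_def using conj_sub[OF P(1) yc] by auto
    have P'A: "P' \<subseteq> A"
      unfolding P'_def using P(2) yc normal.inv_op_closed2[OF A] by auto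
    interpret AG: group "G\<lparr>carrier := A\<rparr>" using subgroup.subgroup_is_group[OF AS is_group] .
    have PA: "subgroup P (G\<lparr>carrier := A\<rparr>)" using subgroup_incl[OF P(1) AS P(2)] .
    have P'A2: "subgroup P' (G\<lparr>carrier := A\<rparr>)" using subgroup_incl[OF P'S AS P'A] .
    have finAG: "finite (carrier (G\<lparr>carrier := A\<rparr>))" using finA by simp
    have cPo: "card P = p ^ multiplicity p (order (G\<lparr>carrier := A\<rparr>))"
      using P(3) unfolding v_def by (simp add: order_def)
    obtain g where g: "g \<in> A" and gP: "\<forall>t\<in>P'. g \<otimes> t \<otimes>\<^bsub>G\<lparr>carrier := A\<rparr>\<^esub> inv\<^bsub>G\<lparr>carrier := A\<rparr>\<^esub> g \<in> P"
      using AG.sylow_conj[OF finAG pp PA cPo P'A2 cP'[unfolded P(3)]] by auto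
    have ginv: "inv\<^bsub>G\<lparr>carrier := A\<rparr>\<^esub> g = inv g" using m_inv_consistent[OF AS g] .
    have t: "y \<otimes> z \<otimes> inv y \<in> P'" unfolding P'_def using z by auto
    hence tA: "y \<otimes> z \<otimes> inv y \<in> A" using P'A by auto
    have gc: "g \<in> carrier G" using g AG by auto
    have tc: "y \<otimes> z \<otimes> inv y \<in> carrier G" using tA AG by auto
    have "g \<otimes> (y \<otimes> z \<otimes> inv y) \<otimes> inv g \<in> P" using gP t ginv by auto
    moreover have "g \<otimes> (y \<otimes> z \<otimes> inv y) \<otimes> inv g = y \<otimes> z \<otimes> inv y"
    proof -
      have "g \<otimes> (y \<otimes> z \<otimes> inv y) = (y \<otimes> z \<otimes> inv y) \<otimes> g" using comm g tA by blast
      hence "g \<otimes> (y \<otimes> z \<otimes> inv y) \<otimes> inv g = (y \<otimes> z \<otimes> inv y) \<otimes> g \<otimes> inv g" by simp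
      also have "\<dots> = y \<otimes> z \<otimes> inv y" using gc tc by (simp add: m_assoc)
      finally show ?thesis .
    qed
    ultimately show "y \<otimes> z \<otimes> inv y \<in> P" by simp
  qed
  have cT: "card P mod q \<noteq> 1"
  proof
    assume h: "card P mod q = 1"
    have "p ^ v \<ge> 1" using one_le_power[OF prime_ge_1_nat[OF pp]] .
    moreover have "1 mod q = 1" using prime_gt_1_nat[OF pq] by simp
    ultimately have "q dvd p ^ v - 1" using h P(3) mod_eq_dvd_iff_nat[of 1 "p ^ v" q] by simp
    thus False using th v1 vle by blast
  qed
  obtain z where z: "z \<in> P" "z \<noteq> \<one>" "\<forall>g\<in>Y. g \<otimes> z = z \<otimes> g"
    using conj_fixed[OF fin pq Y(1) Y(2) P(1) inv cT] by blast
  have zc: "z \<in> carrier G" using subgroup.mem_carrier[OF P(1) z(1)] .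
  have finP: "finite P" using finite_subset[OF P(2) finA] .
  have "z [^] (p ^ v) = \<one>" using sub_pow_order[OF P(1) z(1) finP] P(3) by simp
  then obtain i where i: "ord (z [^] (p ^ (i - 1))) = p"
    using elt_prime_ord[OF zc z(2) pp] by blast
  have u1: "q dvd card Y"
  proof -
    have "card (carrier G) \<noteq> 0" using o0 by (simp add: order_def)
    hence "u \<ge> 1" unfolding u_def using dG pq
      by (metis multiplicity_geI not_prime_unit order_def power_one_right)
    thus ?thesis using Y(2) by (simp add: dvd_power)
  qed
  obtain y where y: "y \<in> Y" "ord y = q" using cauchy_sub[OF fin Y(1) pq u1] by blast
  have yc: "y \<in> carrier G" using subgroup.mem_carrier[OF Y(1) y(1)] .
  define z' where "z' = z [^] (p ^ (i - 1))"
  have z'c: "z' \<in> carrier G" unfolding z'_def using zc by simp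
  have "y \<otimes> z' = z' \<otimes> y" unfolding z'_def using comm_pow[OF yc zc] z(3) y(1) by blast
  hence "ord (z' \<otimes> y) = p * q"
    using ord_pq[OF z'c yc _ _ y(2) pp pq ne] i unfolding z'_def by simp
  moreover have "z' \<otimes> y \<in> carrier G" using z'c yc by simp
  ultimately show ?thesis by blast
qed

end



context group begin

lemma hom_index_dvd:
  assumes M: "M \<lhd> G" and N: "subgroup N G" and surj: "(\<lambda>n. M #> n) ` N = rcosets M"
  shows "card (rcosets M) dvd card N"
proof -
  interpret NG: group "G\<lparr>carrier := N\<rparr>" using subgroup.subgroup_is_group[OF N is_group] .
  have NGc: "N \<subseteq> carrier G" using subgroup.subset[OF N] .
  have hom: "(\<lambda>n. M #> n) \<in> hom (G\<lparr>carrier := N\<rparr>) (G Mod M)"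
  proof (rule homI)
    fix x assume "x \<in> carrier (G\<lparr>carrier := N\<rparr>)"
    hence "x \<in> carrier G" using NGc by auto
    thus "M #> x \<in> carrier (G Mod M)" using hom_in_carrier[OF normal.r_coset_hom_Mod[OF M]] by auto
  next
    fix x y assume "x \<in> carrier (G\<lparr>carrier := N\<rparr>)" "y \<in> carrier (G\<lparr>carrier := N\<rparr>)"
    hence "x \<in> carrier G" "y \<in> carrier G" using NGc by auto
    moreover have "\<forall>x\<in>carrier G. \<forall>y\<in>carrier G. M #> (x \<otimes> y) = (M #> x) \<otimes>\<^bsub>G Mod M\<^esub> (M #> y)"
      using normal.r_coset_hom_Mod[OF M] unfolding hom_def by blast
    ultimately show "M #> (x \<otimes>\<^bsub>G\<lparr>carrier := N\<rparr>\<^esub> y) = (M #> x) \<otimes>\<^bsub>G Mod M\<^esub> (M #> y)"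
      by simp
  qed
  have FG: "group (G Mod M)" using normal.factorgroup_is_group[OF M] .
  interpret gh: group_hom "G\<lparr>carrier := N\<rparr>" "G Mod M" "\<lambda>n. M #> n"
    by (rule group_hom.intro[OF NG.is_group FG group_hom_axioms.intro[OF hom]])
  have "(\<lambda>n. M #> n) ` carrier (G\<lparr>carrier := N\<rparr>) = carrier (G Mod M)"
    using surj by (simp add: FactGroup_def)
  hence iso: "(G\<lparr>carrier := N\<rparr>) Mod (kernel (G\<lparr>carrier := N\<rparr>) (G Mod M) (\<lambda>n. M #> n)) \<cong> G Mod M"
    by (rule gh.FactGroup_iso)
  define K where "K = kernel (G\<lparr>carrier := N\<rparr>) (G Mod M) (\<lambda>n. M #> n)"
  have c1: "card (carrier ((G\<lparr>carrier := N\<rparr>) Mod K)) = card (rcosets M)"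
    using iso_same_card[OF iso] unfolding K_def by (simp add: FactGroup_def)
  have "card (carrier ((G\<lparr>carrier := N\<rparr>) Mod K)) * card K = order (G\<lparr>carrier := N\<rparr>)"
    using NG.lagrange[OF gh.subgroup_kernel] unfolding K_def by (simp add: FactGroup_def)
  hence "card (rcosets M) * card K = card N" using c1 by (simp add: order_def)
  thus ?thesis by (metis dvd_triv_left)
qed

lemma normalizer_sub:
  assumes T: "subgroup T G"
  shows "subgroup {g \<in> carrier G. (\<lambda>t. g \<otimes> t \<otimes> inv g) ` T = T} G"
proof -
  have TG: "T \<subseteq> carrier G" using subgroup.subset[OF T] .
  show ?thesis
  proof (rule subgroupI)
    show "{g \<in> carrier G. (\<lambda>t. g \<otimes> t \<otimes> inv g) ` T = T} \<subseteq> carrier G" by auto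
    have "(\<lambda>t. \<one> \<otimes> t \<otimes> inv \<one>) ` T = (\<lambda>t. t) ` T" using TG by (intro image_cong) auto
    hence "(\<lambda>t. \<one> \<otimes> t \<otimes> inv \<one>) ` T = T" by simp
    hence "\<one> \<in> {g \<in> carrier G. (\<lambda>t. g \<otimes> t \<otimes> inv g) ` T = T}" by simp
    thus "{g \<in> carrier G. (\<lambda>t. g \<otimes> t \<otimes> inv g) ` T = T} \<noteq> {}" by blast
  next
    fix g assume "g \<in> {g \<in> carrier G. (\<lambda>t. g \<otimes> t \<otimes> inv g) ` T = T}"
    hence g: "g \<in> carrier G" and gT: "(\<lambda>t. g \<otimes> t \<otimes> inv g) ` T = T" by auto
    have "(\<lambda>t. inv g \<otimes> t \<otimes> inv (inv g)) ` T = T"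
    proof
      show "(\<lambda>t. inv g \<otimes> t \<otimes> inv (inv g)) ` T \<subseteq> T"
      proof
        fix x assume "x \<in> (\<lambda>t. inv g \<otimes> t \<otimes> inv (inv g)) ` T"
        then obtain t where t: "t \<in> T" "x = inv g \<otimes> t \<otimes> g" using g by auto
        then obtain s where s: "s \<in> T" "t = g \<otimes> s \<otimes> inv g" using gT by blast
        have sc: "s \<in> carrier G" using s TG by auto
        have "x = s" using t(2) s(2) g sc by (simp add: m_assoc inv_cancel_l)
        thus "x \<in> T" using s by simp
      qed
    next
      show "T \<subseteq> (\<lambda>t. inv g \<otimes> t \<otimes> inv (inv g)) ` T"
      proof
        fix s assume s: "s \<in> T"
        have sc: "s \<in> carrier G" using s TG by auto
        have "g \<otimes> s \<otimes> inv g \<in> T" using gT s by blast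
        moreover have "s = inv g \<otimes> (g \<otimes> s \<otimes> inv g) \<otimes> inv (inv g)"
          using g sc by (simp add: m_assoc inv_cancel_l)
        ultimately show "s \<in> (\<lambda>t. inv g \<otimes> t \<otimes> inv (inv g)) ` T" by blast
      qed
    qed
    thus "inv g \<in> {g \<in> carrier G. (\<lambda>t. g \<otimes> t \<otimes> inv g) ` T = T}" using g by simp
  next
    fix g h assume "g \<in> {g \<in> carrier G. (\<lambda>t. g \<otimes> t \<otimes> inv g) ` T = T}"
      "h \<in> {g \<in> carrier G. (\<lambda>t. g \<otimes> t \<otimes> inv g) ` T = T}"
    hence g: "g \<in> carrier G" and gT: "(\<lambda>t. g \<otimes> t \<otimes> inv g) ` T = T"
      and h: "h \<in> carrier G" and hT: "(\<lambda>t. h \<otimes> t \<otimes> inv h) ` T = T" by auto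
    have "(\<lambda>t. (g \<otimes> h) \<otimes> t \<otimes> inv (g \<otimes> h)) ` T = (\<lambda>t. g \<otimes> t \<otimes> inv g) ` ((\<lambda>t. h \<otimes> t \<otimes> inv h) ` T)"
      unfolding image_image
    proof (rule image_cong[OF refl])
      fix t assume "t \<in> T"
      hence tc: "t \<in> carrier G" using TG by auto
      show "(g \<otimes> h) \<otimes> t \<otimes> inv (g \<otimes> h) = g \<otimes> (h \<otimes> t \<otimes> inv h) \<otimes> inv g"
        using g h tc by (simp add: m_assoc inv_mult_group)
    qed
    also have "\<dots> = T" using gT hT by simp
    finally show "g \<otimes> h \<in> {g \<in> carrier G. (\<lambda>t. g \<otimes> t \<otimes> inv g) ` T = T}" using g h by simp
  qed
qed

end



context group begin

lemma caseB:
  assumes fin: "finite (carrier G)" and M: "M \<lhd> G"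
    and pp: "Factorial_Ring.prime p" and pq: "Factorial_Ring.prime q" and ne: "p \<noteq> q"
    and nq: "\<not> q dvd card (rcosets M)" and dp: "p dvd card (rcosets M)"
    and th: "\<not> p dvd q ^ multiplicity q (order G) - 1"
  shows "\<exists>x\<in>carrier G. ord x = p * q"
proof -
  have MS: "subgroup M G" using normal_imp_subgroup[OF M] .
  have MG: "M \<subseteq> carrier G" using subgroup.subset[OF MS] .
  have finM: "finite M" using finite_subset[OF MG fin] .
  define n where "n = multiplicity q (order G)"
  have lag: "card (rcosets M) * card M = order G" using lagrange[OF MS] .
  have o0: "order G \<noteq> 0" using fin by (simp add: order_gt_0_iff_finite[symmetric])
  have nM: "multiplicity q (card M) = n"
  proof -
    have a0: "card (rcosets M) \<noteq> 0" and b0: "card M \<noteq> 0" using lag o0 by (metis mult_is_0)+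
    have "multiplicity q (order G) = multiplicity q (card (rcosets M)) + multiplicity q (card M)"
      using lag a0 b0 pq by (metis prime_elem_multiplicity_mult_distrib prime_imp_prime_elem)
    moreover have "multiplicity q (card (rcosets M)) = 0" using nq by (simp add: not_dvd_imp_multiplicity_0)
    ultimately show ?thesis unfolding n_def by simp
  qed
  obtain T where T: "subgroup T G" "T \<subseteq> M" "card T = q ^ multiplicity q (card M)"
    using sylow_sub[OF fin MS pq] by blast
  have cT: "card T = q ^ n" using T(3) nM by simp
  have TG: "T \<subseteq> carrier G" using subgroup.subset[OF T(1)] .
  have finT: "finite T" using finite_subset[OF TG fin] .
  define N where "N = {g \<in> carrier G. (\<lambda>t. g \<otimes> t \<otimes> inv g) ` T = T}"
  have NS: "subgroup N G" unfolding N_def using normalizer_sub[OF T(1)] .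
  have NG: "N \<subseteq> carrier G" using subgroup.subset[OF NS] .
  have frat: "\<exists>m\<in>M. m \<otimes> g \<in> N" if g: "g \<in> carrier G" for g
  proof -
    define Tg where "Tg = (\<lambda>t. g \<otimes> t \<otimes> inv g) ` T"
    have TgS: "subgroup Tg G" and cTg0: "card Tg = card T" unfolding Tg_def using conj_sub[OF T(1) g] by auto
    have TgM: "Tg \<subseteq> M" unfolding Tg_def using T(2) g normal.inv_op_closed2[OF M] by auto
    interpret MGr: group "G\<lparr>carrier := M\<rparr>" using subgroup.subgroup_is_group[OF MS is_group] .
    have TM: "subgroup T (G\<lparr>carrier := M\<rparr>)" using subgroup_incl[OF T(1) MS T(2)] .
    have TgM2: "subgroup Tg (G\<lparr>carrier := M\<rparr>)" using subgroup_incl[OF TgS MS TgM] .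
    have finMG: "finite (carrier (G\<lparr>carrier := M\<rparr>))" using finM by simp
    have cTo: "card T = q ^ multiplicity q (order (G\<lparr>carrier := M\<rparr>))"
      using T(3) by (simp add: order_def)
    have cTg: "card Tg = q ^ n" using cTg0 cT by simp
    obtain m where m: "m \<in> M" and mT: "\<forall>t\<in>Tg. m \<otimes> t \<otimes>\<^bsub>G\<lparr>carrier := M\<rparr>\<^esub> inv\<^bsub>G\<lparr>carrier := M\<rparr>\<^esub> m \<in> T"
      using MGr.sylow_conj[OF finMG pq TM cTo TgM2 cTg] by auto
    have minv: "inv\<^bsub>G\<lparr>carrier := M\<rparr>\<^esub> m = inv m" using m_inv_consistent[OF MS m] .
    have mc: "m \<in> carrier G" using m MG by auto
    define k where "k = m \<otimes> g"
    have kc: "k \<in> carrier G" unfolding k_def using mc g by simp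
    have sub: "(\<lambda>t. k \<otimes> t \<otimes> inv k) ` T \<subseteq> T"
    proof
      fix x assume "x \<in> (\<lambda>t. k \<otimes> t \<otimes> inv k) ` T"
      then obtain s where s: "s \<in> T" "x = k \<otimes> s \<otimes> inv k" by auto
      have sc: "s \<in> carrier G" using s TG by auto
      have "g \<otimes> s \<otimes> inv g \<in> Tg" unfolding Tg_def using s by auto
      hence "m \<otimes> (g \<otimes> s \<otimes> inv g) \<otimes> inv m \<in> T" using mT minv by auto
      moreover have "x = m \<otimes> (g \<otimes> s \<otimes> inv g) \<otimes> inv m"
        unfolding s(2) k_def using mc g sc by (simp add: m_assoc inv_mult_group)
      ultimately show "x \<in> T" by simp
    qed
    have "card ((\<lambda>t. k \<otimes> t \<otimes> inv k) ` T) = card T" using conj_sub(2)[OF T(1) kc] .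
    hence "(\<lambda>t. k \<otimes> t \<otimes> inv k) ` T = T" using card_subset_eq[OF finT sub] by simp
    hence "k \<in> N" unfolding N_def using kc by simp
    thus ?thesis using m unfolding k_def by blast
  qed
  have surj: "(\<lambda>n. M #> n) ` N = rcosets M"
  proof
    show "(\<lambda>n. M #> n) ` N \<subseteq> rcosets M" using NG rcosetsI[OF MG] by auto
  next
    show "rcosets M \<subseteq> (\<lambda>n. M #> n) ` N"
    proof
      fix C assume "C \<in> rcosets M"
      then obtain g where g: "g \<in> carrier G" "C = M #> g" unfolding RCOSETS_def by auto
      obtain m where m: "m \<in> M" "m \<otimes> g \<in> N" using frat[OF g(1)] by blast
      have mc: "m \<in> carrier G" using m MG by auto
      have "M #> (m \<otimes> g) = (M #> m) #> g" using coset_mult_assoc[OF MG mc g(1)] by simp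
      also have "\<dots> = M #> g" using subgroup.rcos_const[OF MS is_group m(1)] by simp
      finally have "C = M #> (m \<otimes> g)" using g(2) by simp
      thus "C \<in> (\<lambda>n. M #> n) ` N" using m(2) by blast
    qed
  qed
  have "card (rcosets M) dvd card N" using hom_index_dvd[OF M NS surj] .
  hence dN: "p dvd card N" using dp dvd_trans by blast
  obtain P0 where P0: "subgroup P0 G" "P0 \<subseteq> N" "card P0 = p ^ multiplicity p (card N)"
    using sylow_sub[OF fin NS pp] by blast
  have inv: "\<forall>g\<in>P0. \<forall>t\<in>T. g \<otimes> t \<otimes> inv g \<in> T"
  proof (intro ballI)
    fix g t assume "g \<in> P0" "t \<in> T"
    hence "g \<in> N" using P0(2) by auto
    hence "(\<lambda>t. g \<otimes> t \<otimes> inv g) ` T = T" unfolding N_def by simp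
    thus "g \<otimes> t \<otimes> inv g \<in> T" using \<open>t \<in> T\<close> by blast
  qed
  have cTm: "card T mod p \<noteq> 1"
  proof
    assume h: "card T mod p = 1"
    have "q ^ n \<ge> 1" using one_le_power[OF prime_ge_1_nat[OF pq]] .
    moreover have "1 mod p = 1" using prime_gt_1_nat[OF pp] by simp
    ultimately have "p dvd q ^ n - 1" using h cT mod_eq_dvd_iff_nat[of 1 "q ^ n" p] by simp
    thus False using th unfolding n_def by simp
  qed
  obtain t where t: "t \<in> T" "t \<noteq> \<one>" "\<forall>g\<in>P0. g \<otimes> t = t \<otimes> g"
    using conj_fixed[OF fin pp P0(1) P0(3) T(1) inv cTm] by blast
  have tc: "t \<in> carrier G" using t(1) TG by auto
  have "t [^] (q ^ n) = \<one>" using sub_pow_order[OF T(1) t(1) finT] cT by simp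
  then obtain i where i: "ord (t [^] (q ^ (i - 1))) = q"
    using elt_prime_ord[OF tc t(2) pq] by blast
  have finN: "finite N" using finite_subset[OF NG fin] .
  have cN0: "card N \<noteq> 0" using finN subgroup.one_closed[OF NS] by (metis card_0_eq empty_iff)
  have "multiplicity p (card N) \<ge> 1" using dN pp cN0
    by (metis multiplicity_geI not_prime_unit power_one_right)
  hence "p dvd card P0" using P0(3) by (simp add: dvd_power)
  then obtain x where x: "x \<in> P0" "ord x = p" using cauchy_sub[OF fin P0(1) pp] by blast
  have xc: "x \<in> carrier G" using subgroup.mem_carrier[OF P0(1) x(1)] .
  define t' where "t' = t [^] (q ^ (i - 1))"
  have t'c: "t' \<in> carrier G" unfolding t'_def using tc by simp
  have "x \<otimes> t' = t' \<otimes> x" unfolding t'_def using comm_pow[OF xc tc] t(3) x(1) by blast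
  hence "ord (x \<otimes> t') = p * q"
    using ord_pq[OF xc t'c _ x(2) _ pp pq ne] i unfolding t'_def by simp
  moreover have "x \<otimes> t' \<in> carrier G" using xc t'c by simp
  ultimately show ?thesis by blast
qed

end



context group begin

lemma quot_hom:
  assumes M: "M \<lhd> G"
  shows "group_hom G (G Mod M) (\<lambda>a. M #> a)"
  by (rule group_hom.intro[OF is_group normal.factorgroup_is_group[OF M]
        group_hom_axioms.intro[OF normal.r_coset_hom_Mod[OF M]]])

lemma lift_ord:
  assumes fin: "finite (carrier G)" and M: "M \<lhd> G" and z: "z \<in> carrier (G Mod M)"
    and oz: "group.ord (G Mod M) z = n" and n0: "n \<noteq> 0"
  shows "\<exists>x\<in>carrier G. ord x = n"
proof -
  interpret h: group_hom G "G Mod M" "\<lambda>a. M #> a" using quot_hom[OF M] .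
  obtain g where g: "g \<in> carrier G" "z = M #> g" using z unfolding FactGroup_def RCOSETS_def by auto
  have "g [^] ord g = \<one>" using g(1) by simp
  hence "M #> (g [^] ord g) = \<one>\<^bsub>G Mod M\<^esub>" using h.hom_one by simp
  hence "z [^]\<^bsub>G Mod M\<^esub> ord g = \<one>\<^bsub>G Mod M\<^esub>" using h.hom_nat_pow[OF g(1)] g(2) by simp
  hence "n dvd ord g" using h.H.pow_eq_id[OF z] oz by simp
  then obtain k where k: "ord g = n * k" by (auto elim: dvdE)
  have og: "ord g \<ge> 1" using ord_ge_1[OF fin g(1)] .
  hence k0: "k \<noteq> 0" using k by auto
  have "ord (g [^] k) = ord g div k" using ord_pow[OF g(1) _ k0] k by simp
  also have "\<dots> = n" using k k0 by simp
  finally show ?thesis using g(1) by (intro bexI[of _ "g [^] k"]) auto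
qed

lemma quot_normal_img:
  assumes M: "M \<lhd> G" and L: "L \<lhd> G"
  shows "(\<lambda>a. M #> a) ` L \<lhd> G Mod M"
proof -
  interpret h: group_hom G "G Mod M" "\<lambda>a. M #> a" using quot_hom[OF M] .
  have LS: "subgroup L G" using normal_imp_subgroup[OF L] .
  have LG: "L \<subseteq> carrier G" using subgroup.subset[OF LS] .
  show ?thesis
  proof (subst h.H.normal_inv_iff, intro conjI ballI)
    show "subgroup ((\<lambda>a. M #> a) ` L) (G Mod M)" using h.subgroup_img_is_subgroup[OF LS] .
  next
    fix x y assume x: "x \<in> carrier (G Mod M)" and y: "y \<in> (\<lambda>a. M #> a) ` L"
    obtain g where g: "g \<in> carrier G" "x = M #> g" using x unfolding FactGroup_def RCOSETS_def by auto
    obtain l where l: "l \<in> L" "y = M #> l" using y by auto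
    have lc: "l \<in> carrier G" using l LG by auto
    have "x \<otimes>\<^bsub>G Mod M\<^esub> y \<otimes>\<^bsub>G Mod M\<^esub> inv\<^bsub>G Mod M\<^esub> x = M #> (g \<otimes> l \<otimes> inv g)"
      using g l lc by simp
    moreover have "g \<otimes> l \<otimes> inv g \<in> L" using normal.inv_op_closed2[OF L g(1) l(1)] .
    ultimately show "x \<otimes>\<^bsub>G Mod M\<^esub> y \<otimes>\<^bsub>G Mod M\<^esub> inv\<^bsub>G Mod M\<^esub> x \<in> (\<lambda>a. M #> a) ` L" by auto
  qed
qed

lemma quot_comm:
  assumes M: "M \<lhd> G" and LS: "subgroup L G" and dM: "derived G L \<subseteq> M"
  shows "\<forall>a\<in>(\<lambda>a. M #> a) ` L. \<forall>b\<in>(\<lambda>a. M #> a) ` L. a \<otimes>\<^bsub>G Mod M\<^esub> b = b \<otimes>\<^bsub>G Mod M\<^esub> a"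
proof (intro ballI)
  interpret h: group_hom G "G Mod M" "\<lambda>a. M #> a" using quot_hom[OF M] .
  have LG: "L \<subseteq> carrier G" using subgroup.subset[OF LS] .
  have MS: "subgroup M G" using normal_imp_subgroup[OF M] .
  fix x y assume x: "x \<in> (\<lambda>a. M #> a) ` L" and y: "y \<in> (\<lambda>a. M #> a) ` L"
  obtain a where a: "a \<in> L" "x = M #> a" using x by auto
  obtain b where b: "b \<in> L" "y = M #> b" using y by auto
  have ac: "a \<in> carrier G" and bc: "b \<in> carrier G" using a b LG by auto
  define c where "c = a \<otimes> b \<otimes> inv a \<otimes> inv b"
  have "c \<in> derived_set G L" unfolding c_def using a b by blast
  hence "c \<in> derived G L" unfolding derived_def by (rule generate.incl)
  hence cM: "c \<in> M" using dM by auto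
  have cc: "c \<in> carrier G" unfolding c_def using ac bc by simp
  have ab: "a \<otimes> b = c \<otimes> (b \<otimes> a)" unfolding c_def using ac bc by (simp add: m_assoc inv_cancel_l)
  have "x \<otimes>\<^bsub>G Mod M\<^esub> y = M #> (a \<otimes> b)" using a b ac bc by simp
  also have "\<dots> = (M #> c) \<otimes>\<^bsub>G Mod M\<^esub> (M #> (b \<otimes> a))" using ab cc ac bc h.hom_mult by simp
  also have "M #> c = \<one>\<^bsub>G Mod M\<^esub>" using subgroup.rcos_const[OF MS is_group cM] by (simp add: FactGroup_def)
  also have "\<one>\<^bsub>G Mod M\<^esub> \<otimes>\<^bsub>G Mod M\<^esub> (M #> (b \<otimes> a)) = M #> (b \<otimes> a)"
  proof -
    have "b \<otimes> a \<in> carrier G" using ac bc by simp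
    hence "M #> (b \<otimes> a) \<in> carrier (G Mod M)" by (rule h.hom_closed)
    thus ?thesis by (rule h.H.l_one)
  qed
  also have "\<dots> = y \<otimes>\<^bsub>G Mod M\<^esub> x" using a b ac bc by simp
  finally show "x \<otimes>\<^bsub>G Mod M\<^esub> y = y \<otimes>\<^bsub>G Mod M\<^esub> x" .
qed

lemma quot_card:
  assumes MS: "subgroup M G" and LS: "subgroup L G" and MsubL: "M \<subseteq> L"
  shows "card ((\<lambda>a. M #> a) ` L) * card M = card L"
proof -
  interpret LG: group "G\<lparr>carrier := L\<rparr>" using subgroup.subgroup_is_group[OF LS is_group] .
  have MLG: "subgroup M (G\<lparr>carrier := L\<rparr>)" using subgroup_incl[OF MS LS MsubL] .
  have "rcosets\<^bsub>G\<lparr>carrier := L\<rparr>\<^esub> M = (\<lambda>a. M #> a) ` L"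
    by (auto simp: RCOSETS_def r_coset_def)
  thus ?thesis using LG.lagrange[OF MLG] by (simp add: order_def)
qed

end



context group begin

lemma core:
  assumes fin: "finite (carrier G)" and K: "K \<lhd> G" and solv: "solvable (G\<lparr>carrier := K\<rparr>)"
    and pp: "Factorial_Ring.prime p" and pq: "Factorial_Ring.prime q" and ne: "p \<noteq> q"
    and dK: "p dvd card K" and dG: "q dvd order G"
    and th: "\<forall>i. 1 \<le> i \<longrightarrow> i \<le> multiplicity p (order G) \<longrightarrow> \<not> q dvd p ^ i - 1"
    and thb: "\<not> p dvd q ^ multiplicity q (order G) - 1"
  shows "\<exists>x\<in>carrier G. ord x = p * q"
proof -
  define D where "D = (\<lambda>i. (derived G ^^ i) K)"
  have KS: "subgroup K G" using normal_imp_subgroup[OF K] .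
  have Dsuc: "D (Suc i) = derived G (D i)" for i unfolding D_def by simp
  have Dn: "D i \<lhd> G" for i
  proof (induction i)
    case 0 thus ?case unfolding D_def using K by simp
  next
    case (Suc i) thus ?case using Dsuc derived_is_normal by simp
  qed
  have DS: "subgroup (D i) G" for i using normal_imp_subgroup[OF Dn] .
  have DK: "D i \<subseteq> K" for i
  proof (induction i)
    case 0 thus ?case unfolding D_def by simp
  next
    case (Suc i) thus ?case using Dsuc derived_incl[OF _ KS] by simp
  qed
  have triv: "\<exists>n. D n = {\<one>}"
  proof -
    interpret KG: group "G\<lparr>carrier := K\<rparr>" using subgroup.subgroup_is_group[OF KS is_group] .
    obtain n where n: "(derived (G\<lparr>carrier := K\<rparr>) ^^ n) (carrier (G\<lparr>carrier := K\<rparr>)) = {\<one>\<^bsub>G\<lparr>carrier := K\<rparr>\<^esub>}"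
      using KG.solvable_iff_trivial_derived_seq solv by blast
    have eq: "(derived (G\<lparr>carrier := K\<rparr>) ^^ i) K = D i" for i
    proof (induction i)
      case 0 thus ?case unfolding D_def by simp
    next
      case (Suc i)
      have "(derived (G\<lparr>carrier := K\<rparr>) ^^ Suc i) K = derived (G\<lparr>carrier := K\<rparr>) (D i)"
        using Suc by simp
      also have "\<dots> = derived G (D i)" using derived_consistent[OF DK KS] .
      finally show ?case using Dsuc by simp
    qed
    show ?thesis using n eq[of n] by auto
  qed
  then obtain n where n: "D n = {\<one>}" by blast
  have Dsub: "D (Suc i) \<subseteq> D i" for i using Dsuc derived_incl[OF subset_refl DS] by simp
  have cq: "card ((\<lambda>a. D (Suc i) #> a) ` D i) * card (D (Suc i)) = card (D i)" for i
    using quot_card[OF DS DS Dsub] .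
  have find: "\<forall>i. p dvd card (D i) \<longrightarrow> D (i + k) = {\<one>} \<longrightarrow> (\<exists>j. p dvd card ((\<lambda>a. D (Suc j) #> a) ` D j))" for k
  proof (induction k)
    case 0
    show ?case
    proof (intro allI impI)
      fix i assume "p dvd card (D i)" "D (i + 0) = {\<one>}"
      hence "p dvd 1" by simp
      thus "\<exists>j. p dvd card ((\<lambda>a. D (Suc j) #> a) ` D j)" using pp by simp
    qed
  next
    case (Suc k)
    show ?case
    proof (intro allI impI)
      fix i assume pd: "p dvd card (D i)" and tr: "D (i + Suc k) = {\<one>}"
      show "\<exists>j. p dvd card ((\<lambda>a. D (Suc j) #> a) ` D j)"
      proof (cases "p dvd card ((\<lambda>a. D (Suc i) #> a) ` D i)")
        case True thus ?thesis by blast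
      next
        case False
        have "p dvd card ((\<lambda>a. D (Suc i) #> a) ` D i) * card (D (Suc i))" using pd cq by simp
        hence "p dvd card (D (Suc i))" using False pp prime_dvd_mult_iff by blast
        moreover have "D (Suc i + k) = {\<one>}" using tr by simp
        ultimately show ?thesis using Suc.IH by blast
      qed
    qed
  qed
  have "p dvd card (D 0)" unfolding D_def using dK by simp
  then obtain j where j: "p dvd card ((\<lambda>a. D (Suc j) #> a) ` D j)" using find[of n] n by auto
  define L where "L = D j"
  define M where "M = D (Suc j)"
  define A where "A = (\<lambda>a. M #> a) ` L"
  have LN: "L \<lhd> G" and MN: "M \<lhd> G" unfolding L_def M_def using Dn by auto
  have LS: "subgroup L G" and MS: "subgroup M G" unfolding L_def M_def using DS by auto
  have MsubL: "M \<subseteq> L" unfolding L_def M_def using Dsub by auto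
  have pA: "p dvd card A" unfolding A_def M_def L_def using j .
  have cA: "card A * card M = card L" unfolding A_def using quot_card[OF MS LS MsubL] .
  have lagM: "card (rcosets M) * card M = order G" using lagrange[OF MS] .
  have lagL: "card (rcosets L) * card L = order G" using lagrange[OF LS] .
  have o0: "order G \<noteq> 0" using fin by (simp add: order_gt_0_iff_finite[symmetric])
  have M0: "card M \<noteq> 0" using lagM o0 by (metis mult_is_0)
  have "card (rcosets M) * card M = (card (rcosets L) * card A) * card M" using lagM lagL cA
    by (metis mult.assoc)
  hence "card (rcosets M) = card (rcosets L) * card A" using M0 by simp
  hence Adv: "card A dvd card (rcosets M)" by simp
  show ?thesis
  proof (cases "q dvd card (rcosets M)")
    case True
    interpret Q: group "G Mod M" using normal.factorgroup_is_group[OF MN] .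
    have cQ: "carrier (G Mod M) = rcosets M" by (simp add: FactGroup_def)
    have finQ: "finite (carrier (G Mod M))"
    proof -
      have sub: "rcosets M \<subseteq> Pow (carrier G)" using rcosets_part_G[OF MS] by auto
      show ?thesis using finite_subset[OF sub] fin cQ by simp
    qed
    have An: "A \<lhd> G Mod M" unfolding A_def using quot_normal_img[OF MN LN] .
    have dLM: "derived G L \<subseteq> M" unfolding L_def M_def using Dsuc by simp
    have comm: "\<forall>a\<in>A. \<forall>b\<in>A. a \<otimes>\<^bsub>G Mod M\<^esub> b = b \<otimes>\<^bsub>G Mod M\<^esub> a"
      unfolding A_def using quot_comm[OF MN LS dLM] .
    have oQ: "order (G Mod M) = card (rcosets M)" unfolding order_def using cQ by simp
    have qQ: "q dvd order (G Mod M)" using True oQ by simp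
    have "order (G Mod M) dvd order G" using oQ lagM by (metis dvd_triv_left)
    hence mle: "multiplicity p (order (G Mod M)) \<le> multiplicity p (order G)"
      using o0 by (rule dvd_imp_multiplicity_le)
    have th': "\<forall>i. 1 \<le> i \<longrightarrow> i \<le> multiplicity p (order (G Mod M)) \<longrightarrow> \<not> q dvd p ^ i - 1"
      using th mle by auto
    obtain z where z: "z \<in> carrier (G Mod M)" "group.ord (G Mod M) z = p * q"
      using Q.caseA[OF finQ An comm pp pq ne pA qQ th'] by blast
    have "p * q \<noteq> 0" using pp pq by (simp add: prime_gt_0_nat)
    thus ?thesis using lift_ord[OF fin MN z(1) z(2)] by blast
  next
    case False
    have dp: "p dvd card (rcosets M)" using pA Adv dvd_trans by blast
    show ?thesis using caseB[OF fin MN pp pq ne False dp thb] .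
  qed
qed

end



theorem theorem2p12:
  fixes G :: "('a, 'b) monoid_scheme" and K :: "'a set" and p :: nat
  assumes "group G"
    and "finite (carrier G)"
    and "K \<lhd> G"
    and "solvable (G\<lparr>carrier := K\<rparr>)"
    and "p \<in> pi_grp G"
    and "gk_deg G p < card (H_set G p)"
  shows "p \<notin> pi_num (card K)"
proof
  assume pK: "p \<in> pi_num (card K)"
  interpret G: group G by fact
  have pp: "Factorial_Ring.prime p" and dK: "p dvd card K" using pK unfolding pi_num_def by auto
  have KS: "subgroup K G" using normal_imp_subgroup[OF assms(3)] .
  have o0: "order G \<noteq> 0" using assms(2) by (simp add: G.order_gt_0_iff_finite[symmetric])
  have adj: "gk_adj G p q" if q: "q \<in> H_set G p" for q
  proof -
    have qt: "q \<in> theta G p" and pt: "p \<in> theta_bar G q" using q unfolding H_set_def by auto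
    have qpi: "q \<in> pi_grp G" and ne: "q \<noteq> p"
      and nU: "q \<notin> (\<Union>i\<in>{1..w_grp G p}. pi_num (p ^ i - 1))"
      using qt unfolding theta_def by auto
    have pq: "Factorial_Ring.prime q" and dG: "q dvd order G"
      using qpi unfolding pi_grp_def pi_num_def by auto
    have th: "\<forall>i. 1 \<le> i \<longrightarrow> i \<le> multiplicity p (order G) \<longrightarrow> \<not> q dvd p ^ i - 1"
    proof (intro allI impI notI)
      fix i assume "1 \<le> i" "i \<le> multiplicity p (order G)" "q dvd p ^ i - 1"
      hence "q \<in> (\<Union>i\<in>{1..w_grp G p}. pi_num (p ^ i - 1))"
        using pq unfolding w_grp_def pi_num_def by auto
      thus False using nU by blast
    qed
    have thb: "\<not> p dvd q ^ multiplicity q (order G) - 1"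
      using pt pp unfolding theta_bar_def w_grp_def pi_num_def by auto
    obtain x where x: "x \<in> carrier G" "group.ord G x = p * q"
      using G.core[OF assms(2) assms(3) assms(4) pp pq ne[symmetric] dK dG th thb] by blast
    have "card K dvd order G" using G.lagrange[OF KS] by (metis dvd_triv_right)
    hence "p \<in> pi_grp G" using pp dK unfolding pi_grp_def pi_num_def using dvd_trans by blast
    thus ?thesis unfolding gk_adj_def using qpi ne x by blast
  qed
  have sub: "H_set G p \<subseteq> {q. gk_adj G p q}" using adj by blast
  have fin: "finite {q. gk_adj G p q}"
  proof (rule finite_subset[of _ "{..order G}"])
    show "{q. gk_adj G p q} \<subseteq> {..order G}"
    proof
      fix q assume "q \<in> {q. gk_adj G p q}"
      hence "q dvd order G" unfolding gk_adj_def pi_grp_def pi_num_def by auto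
      thus "q \<in> {..order G}" using o0 by (simp add: dvd_imp_le)
    qed
  qed simp
  have "card (H_set G p) \<le> gk_deg G p" unfolding gk_deg_def using card_mono[OF fin sub] .
  thus False using assms(6) by simp
qed


end
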